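(* Let $G$ be a cubic graph, let $H$ be a hexagon graph of $G$, and let $W$ be the set of white edges of $H$. For every blue perfect matching $M$ of $H$, the set $M\cup W$ ($=M\,\Delta\, W$) is a disjoint union of cycles, and there is an embedding of $G$ on a closed orientable surface whose set of face boundaries is exactly the set of subgraphs of $G$ induced by the cycles of $M\Delta W$. Here the subgraph of $G$ induced by a cycle $C$ of $M\Delta W$ is the subgraph with edge set $\{uv\in E(G): e_{uv}\in C \text{ or } \bar e_{uv}\in C\}$. Conversely, every embedding of $G$ on a closed orientable surface (equivalently, every rotation system of $G$) arises in this way from some blue perfect matching of $H$.
   Context: Hexagon graph. A hexagon is a copy of $K_{3,3}$. Let $G=(V,E)$ be a cubic graph. A hexagon graph $H$ of $G$ is built as follows. (1) Replace each $v\in V$ by a hexagon $h_v$ on vertex set $\{v_i: i\in\mathbb{Z}_6\}$ with edge set $\{v_iv_{i+1}, v_iv_{i+3}: i\in\mathbb{Z}_6\}$, the hexagons being pairwise vertex-disjoint. (2) For each $v$ with $N_G(v)=\{u,w,z\}$, assign to the neighbours pairwise distinct indices $i_{v(u)},i_{v(w)},i_{v(z)}\in\{0,1,2\}\subset\mathbb{Z}_6$. (3) Let $X=\bigcup_v\{v_{2i}\}$ and $Y=\bigcup_v\{v_{2i+1}\}$. Replace each edge $uv\in E$ by two disjoint edges $e_{uv},\bar e_{uv}$: if $v_{i_{v(u)}}$ and $u_{i_{u(v)}}$ both lie in $X$ or both lie in $Y$, put $e_{uv}=v_{i_{v(u)}}u_{i_{u(v)}+3}$, $\bar e_{uv}=v_{i_{v(u)}+3}u_{i_{u(v)}}$;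 otherwise $e_{uv}=v_{i_{v(u)}}u_{i_{u(v)}}$, $\bar e_{uv}=v_{i_{v(u)}+3}u_{i_{u(v)}+3}$. The edges $v_iv_{i+3}$ are red, the edges $v_iv_{i+1}$ are blue, and the edges $e_{uv},\bar e_{uv}$ are white. A blue perfect matching of $H$ is a perfect matching consisting only of blue edges. Rotation system. A rotation system of a graph $G$ is a collection $\{\pi_v: v\in V(G)\}$ where $\pi_v$ is a cyclic permutation of the edges incident with $v$; it determines an embedding of $G$ on a closed orientable surface whose face boundaries are the closed walks $e_1e_2\cdots e_k$ with $e_i=v^iv^{i+1}$, $\pi_{v^{i+1}}(e_i)=e_{i+1}$, $e_{k+1}=e_1$, $k$ minimal. *)

theory Defs
  imports Main
begin

definition nbrs :: "'a set set \<Rightarrow> 'a \<Rightarrow> 'a set" where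
  "nbrs E v = {u. {u, v} \<in> E}"

definition cubic_graph :: "'a set \<Rightarrow> 'a set set \<Rightarrow> bool" where
  "cubic_graph V E \<longleftrightarrow> finite V
     \<and> (\<forall>e\<in>E. \<exists>u v. e = {u, v} \<and> u \<noteq> v \<and> u \<in> V \<and> v \<in> V)
     \<and> (\<forall>v\<in>V. card (nbrs E v) = 3)"

text \<open>Vertex v_i of the hexagon h_v is the pair (v, i) with i in {0..5} representing Z_6.
  The index assignment i_{v(u)} is idx v u; for each v it must map the three neighbours
  of v bijectively onto {0,1,2}.\<close>
definition hexagon_labelling :: "'a set \<Rightarrow> 'a set set \<Rightarrow> ('a \<Rightarrow> 'a \<Rightarrow> nat) \<Rightarrow> bool" where
  "hexagon_labelling V E idx \<longleftrightarrow> (\<forall>v\<in>V. bij_betw (idx v) (nbrs E v) {0, 1, 2})"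

definition hex_vertices :: "'a set \<Rightarrow> ('a \<times> nat) set" where
  "hex_vertices V = V \<times> {..<6}"

definition red_edges :: "'a set \<Rightarrow> ('a \<times> nat) set set" where
  "red_edges V = {{(v, i), (v, (i + 3) mod 6)} | v i. v \<in> V \<and> i < 6}"

definition blue_edges :: "'a set \<Rightarrow> ('a \<times> nat) set set" where
  "blue_edges V = {{(v, i), (v, (i + 1) mod 6)} | v i. v \<in> V \<and> i < 6}"

text \<open>The white edges e_{uv} and bar e_{uv} replacing the edge uv of G (oriented from v to u as
  in the paper). X = vertices with even index, Y = vertices with odd index.\<close>
definition white_e :: "('a \<Rightarrow> 'a \<Rightarrow> nat) \<Rightarrow> 'a \<Rightarrow> 'a \<Rightarrow> ('a \<times> nat) set" where
  "white_e idx u v =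
     (if even (idx v u) = even (idx u v)
      then {(v, idx v u), (u, (idx u v + 3) mod 6)}
      else {(v, idx v u), (u, idx u v)})"

definition white_ebar :: "('a \<Rightarrow> 'a \<Rightarrow> nat) \<Rightarrow> 'a \<Rightarrow> 'a \<Rightarrow> ('a \<times> nat) set" where
  "white_ebar idx u v =
     (if even (idx v u) = even (idx u v)
      then {(v, (idx v u + 3) mod 6), (u, idx u v)}
      else {(v, (idx v u + 3) mod 6), (u, (idx u v + 3) mod 6)})"

definition white_edges :: "'a set set \<Rightarrow> ('a \<Rightarrow> 'a \<Rightarrow> nat) \<Rightarrow> ('a \<times> nat) set set" where
  "white_edges E idx = {f | f u v. {u, v} \<in> E \<and> (f = white_e idx u v \<or> f = white_ebar idx u v)}"

definition hexagon_graph_edges :: "'a set \<Rightarrow> 'a set set \<Rightarrow> ('a \<Rightarrow> 'a \<Rightarrow> nat) \<Rightarrow> ('a \<times> nat) set set" where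
  "hexagon_graph_edges V E idx = red_edges V \<union> blue_edges V \<union> white_edges E idx"

definition blue_perfect_matching ::
  "'a set \<Rightarrow> 'a set set \<Rightarrow> ('a \<Rightarrow> 'a \<Rightarrow> nat) \<Rightarrow> ('a \<times> nat) set set \<Rightarrow> bool" where
  "blue_perfect_matching V E idx M \<longleftrightarrow>
     M \<subseteq> hexagon_graph_edges V E idx \<and> M \<subseteq> blue_edges V
     \<and> (\<forall>x\<in>hex_vertices V. \<exists>!e. e \<in> M \<and> x \<in> e)"

definition is_cycle :: "'b set set \<Rightarrow> bool" where
  "is_cycle C \<longleftrightarrow> (\<exists>xs. length xs \<ge> 3 \<and> distinct xs \<and>
      C = {{xs ! i, xs ! ((i + 1) mod length xs)} | i. i < length xs})"

text \<open>Edge sets of the connected components (with at least one edge) of the graph with edge set F.\<close>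
definition edge_adj :: "'b set set \<Rightarrow> ('b set \<times> 'b set) set" where
  "edge_adj F = {(e, f). e \<in> F \<and> f \<in> F \<and> e \<inter> f \<noteq> {}}"

definition component_edges :: "'b set set \<Rightarrow> 'b set \<Rightarrow> 'b set set" where
  "component_edges F e = {f \<in> F. (e, f) \<in> (edge_adj F)\<^sup>*}"

definition cycles_of :: "'b set set \<Rightarrow> 'b set set set" where
  "cycles_of F = component_edges F ` F"

definition induced_subgraph :: "'a set set \<Rightarrow> ('a \<Rightarrow> 'a \<Rightarrow> nat) \<Rightarrow> ('a \<times> nat) set set \<Rightarrow> 'a set set" where
  "induced_subgraph E idx C =
     {e \<in> E. \<exists>u v. e = {u, v} \<and> (white_e idx u v \<in> C \<or> white_ebar idx u v \<in> C)}"

text \<open>In a simple graph the edges incident with v correspond to the neighbours of v; a rotation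
  system is given by, for each v, a cyclic permutation rho v of the neighbours of v.\<close>
definition rotation_system :: "'a set \<Rightarrow> 'a set set \<Rightarrow> ('a \<Rightarrow> 'a \<Rightarrow> 'a) \<Rightarrow> bool" where
  "rotation_system V E \<rho> \<longleftrightarrow> (\<forall>v\<in>V. bij_betw (\<rho> v) (nbrs E v) (nbrs E v)
      \<and> (\<forall>u\<in>nbrs E v. \<forall>w\<in>nbrs E v. \<exists>k. (\<rho> v ^^ k) u = w))"

text \<open>Darts (u,v) are oriented edges. The face walk traversing edge uv from u to v continues with
  the edge v w where w = rho v u (i.e. pi_v(vu) = vw).\<close>
definition darts :: "'a set set \<Rightarrow> ('a \<times> 'a) set" where
  "darts E = {(u, v). {u, v} \<in> E}"

definition face_step :: "('a \<Rightarrow> 'a \<Rightarrow> 'a) \<Rightarrow> 'a \<times> 'a \<Rightarrow> 'a \<times> 'a" where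
  "face_step \<rho> d = (snd d, \<rho> (snd d) (fst d))"

definition face_boundary :: "('a \<Rightarrow> 'a \<Rightarrow> 'a) \<Rightarrow> 'a \<times> 'a \<Rightarrow> 'a set set" where
  "face_boundary \<rho> d = {{fst ((face_step \<rho> ^^ k) d), snd ((face_step \<rho> ^^ k) d)} | k. True}"

definition face_boundaries :: "'a set set \<Rightarrow> ('a \<Rightarrow> 'a \<Rightarrow> 'a) \<Rightarrow> 'a set set set" where
  "face_boundaries E \<rho> = face_boundary \<rho> ` darts E"

end

theory Submission
  imports Defs
begin


locale twoinv =
  fixes S :: "'b set" and sg tu :: "'b \<Rightarrow> 'b" and P :: "'b \<Rightarrow> bool"
  assumes fin: "finite S"
  and sS: "x\<in>S \<Longrightarrow> sg x \<in> S" and tS: "x \<in> S \<Longrightarrow> tu x \<in> S"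
  and ss: "x\<in>S \<Longrightarrow> sg (sg x) = x" and tt: "x\<in>S \<Longrightarrow> tu (tu x) = x"
  and Ps: "x\<in>S \<Longrightarrow> P (sg x) = (\<not> P x)" and Pt: "x\<in>S \<Longrightarrow> P (tu x) = (\<not> P x)"
  and st: "x\<in>S \<Longrightarrow> sg x \<noteq> tu x"
begin

definition "FF = (\<lambda>x. {x, sg x}) ` S \<union> (\<lambda>x. {x, tu x}) ` S"
definition "ph = tu \<circ> sg"

lemma phS: "x \<in> S \<Longrightarrow> ph x \<in> S" by (simp add: ph_def sS tS)
lemma phkS: "x \<in> S \<Longrightarrow> (ph^^k) x \<in> S" by (induction k) (auto simp: phS)
lemma phP: "x \<in> S \<Longrightarrow> P (ph x) = P x" by (simp add: ph_def Pt Ps sS)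
lemma phkP: "x \<in> S \<Longrightarrow> P ((ph^^k) x) = P x" by (induction k) (auto simp: phP phkS)
lemma ph_inj: "inj_on ph S"
  by (rule inj_onI) (metis comp_apply ph_def sS ss tt)
lemma phk_inj: "inj_on (ph^^k) S"
proof (induction k)
  case 0 then show ?case by simp
next
  case (Suc k)
  have "inj_on (ph \<circ> ph^^k) S"
    by (rule comp_inj_on[OF Suc]) (rule inj_on_subset[OF ph_inj], auto simp: phkS)
  then show ?case by (simp add: comp_def)
qed

lemma period_ex: assumes x: "x \<in> S" shows "\<exists>p>0. (ph^^p) x = x"
proof -
  let ?f = "\<lambda>k. (ph^^k) x"
  have "\<not> inj_on ?f {..card S}"
  proof
    assume "inj_on ?f {..card S}"
    then have "card {..card S} \<le> card S"
      by (rule card_inj_on_le) (auto simp: phkS x fin)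
    then show False by simp
  qed
  then obtain i j where ij: "i \<noteq> j" "?f i = ?f j" unfolding inj_on_def by blast
  { fix i j assume "i < j" "?f i = ?f j"
    then have "(ph^^i) ((ph^^(j-i)) x) = (ph^^i) x"
      by (metis add_diff_inverse_nat comp_apply funpow_add order_less_imp_not_less)
    then have "(ph^^(j-i)) x = x" using phk_inj[of i] x phkS
      by (meson inj_onD)
    then have "\<exists>p>0. (ph^^p) x = x" using \<open>i<j\<close> by (intro exI[of _ "j-i"]) auto }
  with ij show ?thesis by (metis linorder_neqE_nat)
qed

definition "per x = (LEAST p. p > 0 \<and> (ph^^p) x = x)"

lemma per: assumes "x \<in> S" shows "per x > 0" "(ph^^(per x)) x = x"
  "\<And>m. 0 < m \<Longrightarrow> m < per x \<Longrightarrow> (ph^^m) x \<noteq> x"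
proof -
  obtain p where "p>0 \<and> (ph^^p) x = x" using period_ex[OF assms] by blast
  then have "per x > 0 \<and> (ph^^(per x)) x = x" unfolding per_def by (rule LeastI)
  then show "per x > 0" "(ph^^(per x)) x = x" by auto
  show "\<And>m. 0 < m \<Longrightarrow> m < per x \<Longrightarrow> (ph^^m) x \<noteq> x"
    unfolding per_def using not_less_Least by blast
qed

lemma per_ge2: assumes "x \<in> S" shows "per x \<ge> 2"
proof (rule ccontr)
  assume "\<not> per x \<ge> 2"
  then have "per x = 1" using per(1)[OF assms] by linarith
  then have "tu (sg x) = x" using per(2)[OF assms] by (simp add: ph_def)
  then have "sg x = tu x" by (metis assms sS tt)
  then show False using st assms by blast
qed

lemma phk_mod: "x \<in> S \<Longrightarrow> (ph^^(k mod per x)) x = (ph^^k) x"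
  by (rule funpow_mod_eq) (rule per(2))

lemma tu_Suc: "x \<in> S \<Longrightarrow> tu ((ph^^(Suc k)) x) = sg ((ph^^k) x)"
  using tt[OF sS[OF phkS[of x k]]] by (simp add: ph_def)

lemma tu_ex: assumes "x \<in> S" shows "\<exists>m. tu ((ph^^k) x) = sg ((ph^^m) x)"
proof (cases k)
  case (Suc m) then show ?thesis using tu_Suc[OF assms] by blast
next
  case 0
  have "per x = Suc (per x - 1)" using per(1)[OF assms] by simp
  then have "tu x = sg ((ph^^(per x - 1)) x)" using tu_Suc[OF assms, of "per x - 1"] per(2)[OF assms]
    by metis
  then show ?thesis using 0 by auto
qed

definition "Cx x = {{(ph^^k) x, sg ((ph^^k) x)} | k. True} \<union> {{(ph^^k) x, tu ((ph^^k) x)} | k. True}"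

lemma Cx_F: "x \<in> S \<Longrightarrow> Cx x \<subseteq> FF"
  unfolding Cx_def FF_def using phkS by blast

lemma F_S: "f \<in> FF \<Longrightarrow> f \<subseteq> S" unfolding FF_def using sS tS by auto

lemma F_at: assumes "f \<in> FF" "y \<in> f" shows "f = {y, sg y} \<or> f = {y, tu y}"
proof -
  have "y \<in> S" using assms F_S by auto
  from assms(1) show ?thesis unfolding FF_def
  proof (elim UnE imageE)
    fix z assume "z \<in> S" "f = {z, sg z}"
    then show ?thesis using assms(2) ss[OF \<open>z\<in>S\<close>] by auto
  next
    fix z assume "z \<in> S" "f = {z, tu z}"
    then show ?thesis using assms(2) tt[OF \<open>z\<in>S\<close>] by auto
  qed
qed

lemma vclose_sg: assumes "x \<in> S" shows "{sg ((ph^^k) x), sg (sg ((ph^^k) x))} \<in> Cx x \<and> {sg ((ph^^k) x), tu (sg ((ph^^k) x))} \<in> Cx x"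
proof -
  have a: "sg (sg ((ph^^k) x)) = (ph^^k) x" using ss phkS assms by blast
  have b: "tu (sg ((ph^^k) x)) = (ph^^(Suc k)) x" by (simp add: ph_def)
  have c: "tu ((ph^^(Suc k)) x) = sg ((ph^^k) x)" using tu_Suc assms by blast
  show ?thesis unfolding a b Cx_def
    apply (rule conjI)
    apply (rule UnI1, rule CollectI, rule exI[of _ k], auto)[1]
    apply (rule UnI2, rule CollectI, rule exI[of _ "Suc k"]) using c by auto
qed

lemma vclose: assumes "x \<in> S" "e \<in> Cx x" "y \<in> e" shows "{y, sg y} \<in> Cx x \<and> {y, tu y} \<in> Cx x"
proof -
  obtain k where k: "e = {(ph^^k) x, sg ((ph^^k) x)} \<or> e = {(ph^^k) x, tu ((ph^^k) x)}"
    using assms(2) unfolding Cx_def by blast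
  have dir: "{(ph^^k) x, sg ((ph^^k) x)} \<in> Cx x \<and> {(ph^^k) x, tu ((ph^^k) x)} \<in> Cx x"
    unfolding Cx_def by blast
  have "y = (ph^^k) x \<or> y = sg ((ph^^k) x) \<or> y = tu ((ph^^k) x)" using k assms(3) by auto
  moreover obtain m where "tu ((ph^^k) x) = sg ((ph^^m) x)" using tu_ex assms(1) by blast
  ultimately show ?thesis using dir vclose_sg[OF assms(1)] by metis
qed

lemma close_step: assumes "x \<in> S" "e \<in> Cx x" "(e, f) \<in> edge_adj FF" shows "f \<in> Cx x"
proof -
  from assms(3) have f: "f \<in> FF" "e \<inter> f \<noteq> {}" unfolding edge_adj_def by auto
  then obtain y where "y \<in> e" "y \<in> f" by blast
  then show ?thesis using F_at[OF f(1) \<open>y\<in>f\<close>] vclose[OF assms(1,2)] by metis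
qed

lemma reach: assumes "x \<in> S"
  shows "({x, sg x}, {(ph^^k) x, sg ((ph^^k) x)}) \<in> (edge_adj FF)\<^sup>* \<and>
         ({x, sg x}, {(ph^^(Suc k)) x, tu ((ph^^(Suc k)) x)}) \<in> (edge_adj FF)\<^sup>*"
proof (induction k)
  case 0
  have e1: "{x, sg x} \<in> FF" unfolding FF_def using assms by blast
  have e2: "{ph x, tu (ph x)} \<in> FF" unfolding FF_def using assms phS by blast
  have "tu (ph x) = sg x" using tu_Suc[OF assms, of 0] by simp
  then have "({x, sg x}, {ph x, tu (ph x)}) \<in> edge_adj FF" unfolding edge_adj_def using e1 e2 by auto
  then show ?case by simp
next
  case (Suc k)
  let ?a = "(ph^^(Suc k)) x"
  have e1: "{?a, tu ?a} \<in> FF" "{?a, sg ?a} \<in> FF" "{(ph^^(Suc (Suc k))) x, tu ((ph^^(Suc (Suc k))) x)} \<in> FF"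
    unfolding FF_def using assms phkS by blast+
  have "({?a, tu ?a}, {?a, sg ?a}) \<in> edge_adj FF" unfolding edge_adj_def using e1 by auto
  then have r1: "({x, sg x}, {?a, sg ?a}) \<in> (edge_adj FF)\<^sup>*" using Suc by (meson rtrancl.rtrancl_into_rtrancl)
  have "tu ((ph^^(Suc (Suc k))) x) = sg ?a" using tu_Suc[OF assms, of "Suc k"] by simp
  then have "({?a, sg ?a}, {(ph^^(Suc (Suc k))) x, tu ((ph^^(Suc (Suc k))) x)}) \<in> edge_adj FF"
    unfolding edge_adj_def using e1 by auto
  with r1 show ?case by (meson rtrancl.rtrancl_into_rtrancl)
qed

lemma reach_all: assumes "x \<in> S" "f \<in> Cx x" shows "({x, sg x}, f) \<in> (edge_adj FF)\<^sup>*"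
proof -
  obtain k where k: "f = {(ph^^k) x, sg ((ph^^k) x)} \<or> f = {(ph^^k) x, tu ((ph^^k) x)}"
    using assms(2) unfolding Cx_def by blast
  show ?thesis
  proof (cases "f = {(ph^^k) x, sg ((ph^^k) x)}")
    case True then show ?thesis using reach[OF assms(1)] by simp
  next
    case False
    then have f: "f = {(ph^^k) x, tu ((ph^^k) x)}" using k by auto
    show ?thesis
    proof (cases k)
      case (Suc m) then show ?thesis using reach[OF assms(1), of m] f by simp
    next
      case 0
      have "per x = Suc (per x - 1)" using per(1)[OF assms(1)] by simp
      then have "(ph^^(Suc (per x - 1))) x = x" using per(2)[OF assms(1)] by metis
      then show ?thesis using reach[OF assms(1), of "per x - 1"] f 0 by simp
    qed
  qed
qed

lemma sym_adj: "sym (edge_adj FF)" unfolding edge_adj_def sym_def by auto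

lemma comp_eq: assumes "x \<in> S" "e \<in> Cx x" shows "component_edges FF e = Cx x"
proof
  show "component_edges FF e \<subseteq> Cx x"
  proof
    fix f assume "f \<in> component_edges FF e"
    then have "(e, f) \<in> (edge_adj FF)\<^sup>*" unfolding component_edges_def by auto
    then show "f \<in> Cx x"
      by (induction rule: rtrancl_induct) (use assms close_step in blast)+
  qed
next
  show "Cx x \<subseteq> component_edges FF e"
  proof
    fix f assume f: "f \<in> Cx x"
    have "({x, sg x}, e) \<in> (edge_adj FF)\<^sup>*" by (rule reach_all[OF assms])
    then have "(e, {x, sg x}) \<in> (edge_adj FF)\<^sup>*" using sym_rtrancl[OF sym_adj] by (meson symD)
    then have "(e, f) \<in> (edge_adj FF)\<^sup>*" using reach_all[OF assms(1) f] by simp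
    then show "f \<in> component_edges FF e" unfolding component_edges_def using Cx_F[OF assms(1)] f by auto
  qed
qed

lemma F_in_Cx: assumes "e \<in> FF" shows "\<exists>x\<in>S. P x \<and> e \<in> Cx x"
proof -
  have A0: "{x, sg x} \<in> Cx x" for x unfolding Cx_def by (auto intro!: exI[of _ 0])
  have B0: "{x, tu x} \<in> Cx x" for x unfolding Cx_def by (auto intro!: exI[of _ 0])
  from assms show ?thesis unfolding FF_def
  proof (elim UnE imageE)
    fix z assume z: "z \<in> S" "e = {z, sg z}"
    show ?thesis
    proof (cases "P z")
      case True then show ?thesis using z A0 by blast
    next
      case False
      have "e = {sg z, sg (sg z)}" using z ss by auto
      then show ?thesis using z A0[of "sg z"] Ps[OF z(1)] False sS by blast
    qed
  next
    fix z assume z: "z \<in> S" "e = {z, tu z}"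
    show ?thesis
    proof (cases "P z")
      case True then show ?thesis using z B0 by blast
    next
      case False
      have "e = {tu z, tu (tu z)}" using z tt by auto
      then show ?thesis using z B0[of "tu z"] Pt[OF z(1)] False tS by blast
    qed
  qed
qed

lemma Cx_cycle: assumes x: "x \<in> S" shows "is_cycle (Cx x)"
proof -
  define p where "p = per x"
  have p2: "p \<ge> 2" using per_ge2[OF x] p_def by simp
  have pfix: "(ph^^p) x = x" using per(2)[OF x] p_def by simp
  have pinj: "inj_on (\<lambda>k. (ph^^k) x) {0..<p}"
    by (rule inj_on_funpow_least) (use per[OF x] p_def in auto)
  define g where "g i = (if even i then (ph^^(i div 2)) x else sg ((ph^^(i div 2)) x))" for i
  define xs where "xs = map g [0..<2*p]"
  have len: "length xs = 2*p" by (simp add: xs_def)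
  have nth: "i < 2*p \<Longrightarrow> xs ! i = g i" for i by (simp add: xs_def)
  have gE: "g (2*k) = (ph^^k) x" for k by (simp add: g_def)
  have gO: "g (2*k+1) = sg ((ph^^k) x)" for k by (simp add: g_def)
  have ginj: "inj_on g {0..<2*p}"
  proof (rule inj_onI)
    fix i j assume i: "i \<in> {0..<2*p}" and j: "j \<in> {0..<2*p}" and e: "g i = g j"
    have id: "i div 2 < p" "j div 2 < p" using i j by auto
    have PP: "P ((ph^^k) x) = P x" "P (sg ((ph^^k) x)) = (\<not> P x)" for k
      using phkP[OF x] Ps[OF phkS[OF x]] by auto
    have "even i = even j"
    proof (rule ccontr)
      assume ne: "even i \<noteq> even j"
      have "P (g i) = (if even i then P x else \<not> P x)" "P (g j) = (if even j then P x else \<not> P x)"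
        unfolding g_def using PP by auto
      then show False using e ne by (cases "even i") auto
    qed
    moreover have "(ph^^(i div 2)) x = (ph^^(j div 2)) x"
    proof (cases "even i")
      case True then show ?thesis using e \<open>even i = even j\<close> unfolding g_def by simp
    next
      case False then have "sg ((ph^^(i div 2)) x) = sg ((ph^^(j div 2)) x)"
        using e \<open>even i = even j\<close> unfolding g_def by simp
      then show ?thesis using ss phkS x by metis
    qed
    then have "i div 2 = j div 2" using pinj id by (auto dest: inj_onD)
    ultimately show "i = j" by (metis div_mult_mod_eq odd_iff_mod_2_eq_one even_iff_mod_2_eq_zero)
  qed
  have dist: "distinct xs" unfolding xs_def by (simp add: distinct_map ginj)
  have "{{xs ! i, xs ! ((i + 1) mod length xs)} | i. i < length xs} = Cx x"
  proof
    show "{{xs ! i, xs ! ((i + 1) mod length xs)} | i. i < length xs} \<subseteq> Cx x"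
    proof
      fix f assume "f \<in> {{xs ! i, xs ! ((i + 1) mod length xs)} | i. i < length xs}"
      then obtain i where i: "i < 2*p" "f = {xs ! i, xs ! ((i + 1) mod (2*p))}" using len by auto
      show "f \<in> Cx x"
      proof (cases "even i")
        case True
        define k where "k = i div 2"
        have ik: "i = 2*k" using True k_def by simp
        have "(i+1) mod (2*p) = 2*k+1" using i(1) ik by simp
        then have "f = {xs ! (2*k), xs ! (2*k+1)}" using i ik by simp
        also have "\<dots> = {g (2*k), g (2*k+1)}" using nth i(1) ik by simp
        also have "\<dots> = {(ph^^k) x, sg ((ph^^k) x)}" using gE gO by simp
        finally show ?thesis unfolding Cx_def by blast
      next
        case False
        define k where "k = i div 2"
        have ik: "i = 2*k+1" using False k_def by presburger
        have c: "tu ((ph^^(Suc k)) x) = sg ((ph^^k) x)" using tu_Suc x by blast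
        have xi: "xs ! i = sg ((ph^^k) x)" using nth i(1) ik gO by simp
        have "f = {(ph^^(Suc k)) x, tu ((ph^^(Suc k)) x)}"
        proof (cases "Suc k < p")
          case True
          then have "(i+1) mod (2*p) = 2 * Suc k" using ik by simp
          then have "xs ! ((i+1) mod (2*p)) = (ph^^(Suc k)) x" using nth[of "2 * Suc k"] gE[of "Suc k"] True by simp
          then show ?thesis using i xi c by auto
        next
          case False
          then have "Suc k = p" using i(1) ik by simp
          then have "i+1 = 2*p" using ik by simp
          then have "(i+1) mod (2*p) = 0" by (simp only:) simp
          then have "xs ! ((i+1) mod (2*p)) = (ph^^(Suc k)) x" using nth[of 0] gE[of 0] \<open>Suc k = p\<close> pfix p2 by simp
          then show ?thesis using i xi c by auto
        qed
        then show ?thesis unfolding Cx_def by blast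
      qed
    qed
  next
    show "Cx x \<subseteq> {{xs ! i, xs ! ((i + 1) mod length xs)} | i. i < length xs}"
    proof
      fix f assume "f \<in> Cx x"
      then obtain k where k: "f = {(ph^^k) x, sg ((ph^^k) x)} \<or> f = {(ph^^k) x, tu ((ph^^k) x)}"
        unfolding Cx_def by blast
      have km: "(ph^^k) x = (ph^^(k mod p)) x" using phk_mod[OF x] p_def by simp
      have kp: "k mod p < p" using p2 by simp
      show "f \<in> {{xs ! i, xs ! ((i + 1) mod length xs)} | i. i < length xs}"
      proof (cases "f = {(ph^^k) x, sg ((ph^^k) x)}")
        case True
        define j where "j = k mod p"
        have jp: "2*j+1 < 2*p" using kp j_def by simp
        then have "(2 * j + 1) mod (2*p) = 2 * j + 1" by simp
        moreover have "xs ! (2*j) = (ph^^k) x" using nth[of "2*j"] gE[of j] jp km j_def by simp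
        moreover have "xs ! (2*j+1) = sg ((ph^^k) x)" using nth[of "2*j+1"] gO[of j] jp km j_def by simp
        ultimately have "f = {xs ! (2 * j), xs ! ((2 * j + 1) mod length xs)}"
          using True len by simp
        moreover have "2 * j < length xs" using jp len by simp
        ultimately show ?thesis by blast
      next
        case False
        then have f: "f = {(ph^^k) x, tu ((ph^^k) x)}" using k by auto
        obtain m where m: "m < p" "(ph^^k) x = (ph^^(Suc m)) x" "Suc m \<le> p"
        proof (cases "k mod p")
          case 0 then show ?thesis using that[of "p - 1"] km pfix p2 by simp
        next
          case (Suc m) then show ?thesis using that[of m] km kp by simp
        qed
        have c: "tu ((ph^^(Suc m)) x) = sg ((ph^^m) x)" using tu_Suc x by blast
        have i1: "2*m+1 < length xs" using m len by simp
        have x1: "xs ! (2*m+1) = sg ((ph^^m) x)" using nth[of "2*m+1"] gO[of m] m by simp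
        have x2: "xs ! ((2*m+1+1) mod length xs) = (ph^^(Suc m)) x"
        proof (cases "Suc m < p")
          case True
          then have "(2*m+1+1) mod (2*p) = 2 * Suc m" by simp
          then show ?thesis using nth[of "2 * Suc m"] gE[of "Suc m"] True len by simp
        next
          case False
          then have "Suc m = p" using m by simp
          then have "2*m+1+1 = 2*p" by simp
          then have "(2*m+1+1) mod (2*p) = 0" by (simp only:) simp
          then show ?thesis using nth[of 0] gE[of 0] len \<open>Suc m = p\<close> pfix p2 by simp
        qed
        have "f = {xs ! (2*m+1), xs ! ((2*m+1+1) mod length xs)}"
          using f m(2) c x1 x2 by auto
        then show ?thesis using i1 by blast
      qed
    qed
  qed
  then show ?thesis unfolding is_cycle_def using dist len p2
    by (intro exI[of _ xs]) auto
qed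

lemma all_cycles: "C \<in> cycles_of FF \<Longrightarrow> is_cycle C"
proof -
  assume "C \<in> cycles_of FF"
  then obtain e where e: "e \<in> FF" "C = component_edges FF e" unfolding cycles_of_def by blast
  then obtain x where "x \<in> S" "e \<in> Cx x" using F_in_Cx by blast
  then show ?thesis using e comp_eq Cx_cycle by simp
qed

end


locale hexctx =
  fixes V :: "'a set" and E :: "'a set set" and idx :: "'a \<Rightarrow> 'a \<Rightarrow> nat"
  assumes cub: "cubic_graph V E" and lab: "hexagon_labelling V E idx"
begin

definition "nb v i = inv_into (nbrs E v) (idx v) i"
definition pos :: "nat \<Rightarrow> bool \<Rightarrow> nat" where "pos b p = (if even b = p then b else b + 3)"
definition "tau x = (nb (fst x) (snd x mod 3), pos (idx (nb (fst x) (snd x mod 3)) (fst x)) (odd (snd x)))"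
definition "xv d = (snd d, pos (idx (snd d) (fst d)) True)"
definition "whp u v = {(v, pos (idx v u) True), (u, pos (idx u v) False)}"

abbreviation "SS \<equiv> hex_vertices V"

lemma finV: "finite V" using cub unfolding cubic_graph_def by auto

lemma edgeV: "{u, v} \<in> E \<Longrightarrow> u \<in> V \<and> v \<in> V \<and> u \<noteq> v"
proof -
  assume e: "{u,v} \<in> E"
  have "\<forall>e\<in>E. \<exists>u v. e = {u, v} \<and> u \<noteq> v \<and> u \<in> V \<and> v \<in> V" using cub unfolding cubic_graph_def by blast
  then obtain a b where "{u,v} = {a,b}" "a \<noteq> b" "a \<in> V" "b \<in> V" using e by blast
  then show ?thesis by (auto simp: doubleton_eq_iff)
qed

lemma nbrs_iff: "u \<in> nbrs E v \<longleftrightarrow> {u, v} \<in> E" by (simp add: nbrs_def)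

lemma bij: "v \<in> V \<Longrightarrow> bij_betw (idx v) (nbrs E v) {0, 1, 2}"
  using lab unfolding hexagon_labelling_def by auto

lemma nbr: assumes "v \<in> V" "u \<in> nbrs E v"
  shows "u \<in> V" "u \<noteq> v" "v \<in> nbrs E u" "idx v u < 3" "nb v (idx v u) = u"
proof -
  have e: "{u,v} \<in> E" using assms(2) unfolding nbrs_def by simp
  then show "u \<in> V" "u \<noteq> v" using edgeV by auto
  have "{v,u} = {u,v}" by (rule insert_commute)
  then show "v \<in> nbrs E u" using e unfolding nbrs_def by simp
  have "idx v u \<in> {0,1,2}" by (rule bij_betw_apply[OF bij[OF assms(1)] assms(2)])
  then show "idx v u < 3" by auto
  show "nb v (idx v u) = u" unfolding nb_def by (rule bij_betw_inv_into_left[OF bij[OF assms(1)] assms(2)])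
qed

lemma nbi: assumes "v \<in> V" "i < 3"
  shows "nb v i \<in> nbrs E v" "idx v (nb v i) = i"
proof -
  have i: "i \<in> {0,1,2}" using assms by auto
  show "nb v i \<in> nbrs E v" unfolding nb_def by (rule bij_betw_apply[OF bij_betw_inv_into[OF bij[OF assms(1)]] i])
  show "idx v (nb v i) = i" unfolding nb_def by (rule bij_betw_inv_into_right[OF bij[OF assms(1)] i])
qed

lemma pos: "b < 3 \<Longrightarrow> pos b p < 6 \<and> pos b p mod 3 = b \<and> even (pos b p) = p"
  unfolding pos_def by (cases p; cases "even b") auto

lemma pos_inv: assumes "j < 6" shows "pos (j mod 3) (even j) = j"
proof -
  have "j = 0 \<or> j = 1 \<or> j = 2 \<or> j = 3 \<or> j = 4 \<or> j = 5" using assms by auto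
  then show ?thesis unfolding pos_def by (elim disjE) simp_all
qed

lemma S_iff: "x \<in> SS \<longleftrightarrow> fst x \<in> V \<and> snd x < 6" by (cases x) (auto simp: hex_vertices_def)

lemma tauS: assumes "x \<in> SS"
  shows "tau x \<in> SS" "tau (tau x) = x" "even (snd (tau x)) = odd (snd x)" "fst (tau x) \<noteq> fst x"
proof -
  obtain v j where x: "x = (v,j)" "v \<in> V" "j < 6" using assms S_iff by (cases x) auto
  define u where "u = nb v (j mod 3)"
  have u: "u \<in> nbrs E v" "idx v u = j mod 3" using nbi[OF x(2), of "j mod 3"] u_def by auto
  have uu0: "u \<in> V" "u \<noteq> v" "v \<in> nbrs E u" using nbr[OF x(2) u(1)] by auto
  have uu: "u \<in> V" "u \<noteq> v" "v \<in> nbrs E u" "idx u v < 3" "nb u (idx u v) = v" using uu0 nbr[OF uu0(1) uu0(3)] by auto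
  have t: "tau x = (u, pos (idx u v) (odd j))" unfolding tau_def x u_def by simp
  show "tau x \<in> SS" "even (snd (tau x)) = odd (snd x)" "fst (tau x) \<noteq> fst x"
    using t pos[OF uu(4)] uu x by (auto simp: S_iff)
  have "tau (u, pos (idx u v) (odd j)) = (v, pos (idx v u) (odd (pos (idx u v) (odd j))))"
    unfolding tau_def using pos[OF uu(4)] uu(5) by simp
  then have "tau (tau x) = (v, pos (idx v u) (odd (pos (idx u v) (odd j))))" using t by simp
  also have "\<dots> = (v, j)" using pos[OF uu(4), of "odd j"] u(2) pos_inv[OF x(3)] by simp
  finally show "tau (tau x) = x" using x by simp
qed

lemma xvS: assumes "{u,v} \<in> E" shows "xv (u,v) \<in> SS" "tau (xv (u,v)) = (u, pos (idx u v) False)"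
  "whp u v = {xv (u,v), tau (xv (u,v))}" "even (snd (xv (u,v)))"
proof -
  have v: "v \<in> V" "u \<in> nbrs E v" using assms edgeV nbrs_iff by auto
  have n: "u \<in> V" "u \<noteq> v" "v \<in> nbrs E u" "idx v u < 3" "nb v (idx v u) = u" using nbr[OF v] by auto
  show "xv (u,v) \<in> SS" "even (snd (xv (u,v)))" using v pos[OF n(4), of True] by (auto simp: S_iff xv_def)
  show t: "tau (xv (u,v)) = (u, pos (idx u v) False)" unfolding tau_def xv_def using pos[OF n(4), of True] n by simp
  show "whp u v = {xv (u,v), tau (xv (u,v))}" by (simp only: t whp_def) (simp add: xv_def)
qed

lemma xv_inj: assumes "{u,v} \<in> E" "{u',v'} \<in> E" "xv (u,v) = xv (u',v')" shows "u = u' \<and> v = v'"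
proof -
  have v: "v \<in> V" "u \<in> nbrs E v" using assms edgeV nbrs_iff by auto
  have v': "v' \<in> V" "u' \<in> nbrs E v'" using assms edgeV nbrs_iff by auto
  have vv: "v = v'" using assms(3) by (simp add: xv_def)
  have "idx v u = idx v u'"
  proof -
    have "pos (idx v u) True = pos (idx v' u') True" using arg_cong[OF assms(3), of snd] unfolding xv_def by simp
    then have "pos (idx v u) True mod 3 = pos (idx v' u') True mod 3" by simp
    then show ?thesis using pos[OF nbr(4)[OF v], of True] pos[OF nbr(4)[OF v'], of True] vv by simp
  qed
  then show ?thesis using nbr(5)[OF v] nbr(5)[OF v'] vv by metis
qed

lemma xv_surj: assumes "x \<in> SS" "even (snd x)" shows "\<exists>u v. {u,v} \<in> E \<and> x = xv (u,v)"
proof -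
  obtain v j where x: "x = (v,j)" "v \<in> V" "j < 6" using assms S_iff by (cases x) auto
  define u where "u = nb v (j mod 3)"
  have u: "u \<in> nbrs E v" "idx v u = j mod 3" using nbi[OF x(2), of "j mod 3"] u_def by auto
  have "xv (u,v) = x" unfolding xv_def using pos_inv[OF x(3)] u(2) assms(2) x by simp
  then show ?thesis using u nbrs_iff by blast
qed

lemma white_pair: assumes "{u,v} \<in> E"
  shows "{white_e idx u v, white_ebar idx u v} = {whp u v, whp v u}"
proof -
  have v: "v \<in> V" "u \<in> nbrs E v" using assms edgeV nbrs_iff by auto
  have a: "idx v u < 3" using nbr[OF v] by auto
  have b: "idx u v < 3" using nbr(4)[OF nbr(1)[OF v] nbr(3)[OF v]] .
  have a3: "idx v u = 0 \<or> idx v u = 1 \<or> idx v u = 2" using a by auto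
  have b3: "idx u v = 0 \<or> idx u v = 1 \<or> idx u v = 2" using b by auto
  have "(white_e idx u v = whp u v \<and> white_ebar idx u v = whp v u) \<or>
        (white_e idx u v = whp v u \<and> white_ebar idx u v = whp u v)"
    unfolding white_e_def white_ebar_def whp_def pos_def
    using a3 b3 by (elim disjE) (simp_all, auto)
  then show ?thesis by auto
qed

lemma white_pair2: assumes "{u,v} \<in> E"
  shows "(white_e idx u v = whp u v \<and> white_ebar idx u v = whp v u) \<or>
        (white_e idx u v = whp v u \<and> white_ebar idx u v = whp u v)"
proof -
  have v: "v \<in> V" "u \<in> nbrs E v" using assms edgeV nbrs_iff by auto
  have a: "idx v u < 3" using nbr[OF v] by auto
  have b: "idx u v < 3" using nbr(4)[OF nbr(1)[OF v] nbr(3)[OF v]] .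
  have a3: "idx v u = 0 \<or> idx v u = 1 \<or> idx v u = 2" using a by auto
  have b3: "idx u v = 0 \<or> idx u v = 1 \<or> idx u v = 2" using b by auto
  show ?thesis
    unfolding white_e_def white_ebar_def whp_def pos_def
    using a3 b3 by (elim disjE) (simp_all, auto)
qed

lemma white_iff: assumes "{u,v} \<in> E"
  shows "(white_e idx u v \<in> C \<or> white_ebar idx u v \<in> C) \<longleftrightarrow> (whp u v \<in> C \<or> whp v u \<in> C)"
  using white_pair2[OF assms] by (elim disjE conjE) (simp_all add: disj_commute)

end

locale hexM = hexctx +
  fixes M assumes bpm: "blue_perfect_matching V E idx M"
begin

definition "sg x = (THE y. {x, y} \<in> M)"

lemma M_blue: "e \<in> M \<Longrightarrow> \<exists>v i. v \<in> V \<and> i < 6 \<and> e = {(v,i),(v,(i+1) mod 6)}"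
  using bpm unfolding blue_perfect_matching_def blue_edges_def by blast

lemma M_uniq: "x \<in> SS \<Longrightarrow> \<exists>!e. e \<in> M \<and> x \<in> e"
  using bpm unfolding blue_perfect_matching_def by blast

lemma sg_char: assumes "x \<in> SS" "{x, y} \<in> M" shows "sg x = y"
  unfolding sg_def
proof (rule the_equality)
  show "{x,y} \<in> M" by fact
  fix y' assume "{x, y'} \<in> M"
  then have "{x,y'} = {x,y}" using M_uniq[OF assms(1)] assms(2) by blast
  then show "y' = y" by (auto simp: doubleton_eq_iff)
qed

lemma mod6a: "(i::nat) < 6 \<Longrightarrow> ((i + 1) mod 6 + 5) mod 6 = i" by presburger

lemma sg_ex: assumes x: "x \<in> SS"
  shows "{x, sg x} \<in> M" "fst (sg x) = fst x" "snd (sg x) = (snd x + 1) mod 6 \<or> snd (sg x) = (snd x + 5) mod 6"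
    "sg x \<in> SS"
proof -
  obtain e where e: "e \<in> M" "x \<in> e" using M_uniq[OF x] by blast
  obtain v i where vi: "v \<in> V" "i < 6" "e = {(v,i),(v,(i+1) mod 6)}" using M_blue[OF e(1)] by blast
  have "\<exists>y. {x,y} \<in> M \<and> fst y = fst x \<and> (snd y = (snd x + 1) mod 6 \<or> snd y = (snd x + 5) mod 6)"
  proof (cases "x = (v,i)")
    case True then show ?thesis using e vi by (intro exI[of _ "(v,(i+1) mod 6)"]) auto
  next
    case False
    then have x2: "x = (v,(i+1) mod 6)" using e vi by auto
    have "{x,(v,i)} = e" using x2 vi by auto
    then show ?thesis using e x2 mod6a[OF vi(2)] by (intro exI[of _ "(v,i)"]) auto
  qed
  then obtain y where y: "{x,y} \<in> M" "fst y = fst x" "snd y = (snd x + 1) mod 6 \<or> snd y = (snd x + 5) mod 6" by blast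
  have "sg x = y" by (rule sg_char[OF x y(1)])
  then show "{x, sg x} \<in> M" "fst (sg x) = fst x" "snd (sg x) = (snd x + 1) mod 6 \<or> snd (sg x) = (snd x + 5) mod 6"
    using y by auto
  then show "sg x \<in> SS" using x unfolding S_iff by auto
qed

lemma sg_sg: assumes x: "x \<in> SS" shows "sg (sg x) = x"
proof -
  have "{sg x, x} = {x, sg x}" by auto
  then show ?thesis using sg_char[OF sg_ex(4)[OF x]] sg_ex(1)[OF x] by simp
qed

lemma sg_par: assumes x: "x \<in> SS" shows "even (snd (sg x)) = odd (snd x)"
proof -
  have "snd x < 6" using x S_iff by auto
  then show ?thesis using sg_ex(3)[OF x] by presburger
qed

sublocale twoinv SS sg tau "\<lambda>x. even (snd x)"
proof
  show "finite SS" unfolding hex_vertices_def using finV by simp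
  fix x assume x: "x \<in> SS"
  show "sg x \<in> SS" "tau x \<in> SS" "sg (sg x) = x" "tau (tau x) = x" using x sg_ex sg_sg tauS by auto
  show "even (snd (sg x)) = (\<not> even (snd x))" "even (snd (tau x)) = (\<not> even (snd x))"
    using sg_par[OF x] tauS(3)[OF x] by auto
  show "sg x \<noteq> tau x" using sg_ex(2)[OF x] tauS(4)[OF x] by metis
qed

lemma M_eq: "M = (\<lambda>x. {x, sg x}) ` SS"
proof
  show "M \<subseteq> (\<lambda>x. {x, sg x}) ` SS"
  proof
    fix e assume e: "e \<in> M"
    obtain v i where vi: "v \<in> V" "i < 6" "e = {(v,i),(v,(i+1) mod 6)}" using M_blue[OF e] by blast
    have xs: "(v,i) \<in> SS" using vi S_iff by auto
    have "sg (v,i) = (v,(i+1) mod 6)" using sg_char[OF xs] e vi by simp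
    then show "e \<in> (\<lambda>x. {x, sg x}) ` SS" using xs vi by auto
  qed
next
  show "(\<lambda>x. {x, sg x}) ` SS \<subseteq> M" using sg_ex(1) by auto
qed

lemma W_eq: "white_edges E idx = (\<lambda>x. {x, tau x}) ` SS"
proof
  show "white_edges E idx \<subseteq> (\<lambda>x. {x, tau x}) ` SS"
  proof
    fix f assume "f \<in> white_edges E idx"
    then obtain u v where uv: "{u,v} \<in> E" "f = white_e idx u v \<or> f = white_ebar idx u v"
      unfolding white_edges_def by blast
    have "{v,u} = {u,v}" by (rule insert_commute)
    then have vu: "{v,u} \<in> E" using uv(1) by simp
    have "f \<in> {whp u v, whp v u}" using white_pair[OF uv(1)] uv(2) by blast
    moreover have "whp u v \<in> (\<lambda>x. {x, tau x}) ` SS" using xvS(1,3)[OF uv(1)] by blast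
    moreover have "whp v u \<in> (\<lambda>x. {x, tau x}) ` SS" using xvS(1,3)[OF vu] by blast
    ultimately show "f \<in> (\<lambda>x. {x, tau x}) ` SS" by blast
  qed
next
  show "(\<lambda>x. {x, tau x}) ` SS \<subseteq> white_edges E idx"
  proof
    fix f assume "f \<in> (\<lambda>x. {x, tau x}) ` SS"
    then obtain x where x: "x \<in> SS" "f = {x, tau x}" by blast
    have "\<exists>y. y \<in> SS \<and> even (snd y) \<and> f = {y, tau y}"
    proof (cases "even (snd x)")
      case True then show ?thesis using x by blast
    next
      case False
      have "f = {tau x, tau (tau x)}" using x tauS(2)[OF x(1)] by auto
      then show ?thesis using tauS(1,3)[OF x(1)] False by blast
    qed
    then obtain y where y: "y \<in> SS" "even (snd y)" "f = {y, tau y}" by blast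
    obtain u v where uv: "{u,v} \<in> E" "y = xv (u,v)" using xv_surj[OF y(1,2)] by blast
    have "f = whp u v" using y(3) uv xvS(3)[OF uv(1)] by simp
    then have "f \<in> {white_e idx u v, white_ebar idx u v}" using white_pair[OF uv(1)] by blast
    then show "f \<in> white_edges E idx" unfolding white_edges_def using uv(1) by blast
  qed
qed

lemma FF_eq: "M \<union> white_edges E idx = FF"
  unfolding FF_def by (rule arg_cong2[where f="(\<union>)", OF M_eq W_eq])

lemma disj: "M \<inter> white_edges E idx = {}"
proof (rule ccontr)
  assume "M \<inter> white_edges E idx \<noteq> {}"
  then obtain e where e: "e \<in> M" "e \<in> white_edges E idx" by blast
  from e(1) M_eq obtain x where x1: "x \<in> SS" "e = {x, sg x}" by blast
  from e(2) obtain y where y1: "y \<in> SS" "e = {y, tau y}" unfolding W_eq by blast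
  have f1: "fst (sg x) = fst x" using sg_ex(2)[OF x1(1)] .
  have f2: "fst (tau y) \<noteq> fst y" using tauS(4)[OF y1(1)] .
  have xin: "x \<in> {y, tau y}" "sg x \<in> {y, tau y}" using x1(2) y1(2) by blast+
  have ne: "sg x \<noteq> x"
  proof
    assume "sg x = x" then show False using sg_par[OF x1(1)] by simp
  qed
  show False
  proof (cases "x = y")
    case True
    then have "sg x = tau y" using xin(2) ne by blast
    then show False using f1 f2 True by simp
  next
    case False
    then have "x = tau y" using xin(1) by blast
    moreover have "sg x = y" using xin(2) ne \<open>x = tau y\<close> by blast
    ultimately show False using f1 f2 by simp
  qed
qed


definition "rho v u = nb v (snd (sg (v, pos (idx v u) True)) mod 3)"
definition "cc v = (if sg (v,0) = (v,1) then 1 else (2::nat))"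

lemma dich: assumes v: "v \<in> V" and i: "i < 3"
  shows "snd (sg (v, pos i True)) mod 3 = (i + cc v) mod 3"
proof -
  define s where "s j = snd (sg (v,j))" for j
  have inS: "j < 6 \<Longrightarrow> (v,j) \<in> SS" for j using v S_iff by auto
  have sgv: "j < 6 \<Longrightarrow> sg (v,j) = (v, s j)" for j
    using sg_ex(2)[OF inS, of j] unfolding s_def by (metis fst_conv prod.collapse)
  have sr: "j < 6 \<Longrightarrow> s j = (j + 1) mod 6 \<or> s j = (j + 5) mod 6" for j
    using sg_ex(3)[OF inS, of j] unfolding s_def by simp
  have slt: "j < 6 \<Longrightarrow> s j < 6" for j using sr[of j] by auto
  have inv: "j < 6 \<Longrightarrow> s (s j) = j" for j
  proof -
    assume j: "j < 6"
    have "sg (sg (v,j)) = (v,j)" using sg_sg[OF inS[OF j]] .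
    then have "sg (v, s j) = (v, j)" using sgv[OF j] by simp
    then show "s (s j) = j" using sgv[OF slt[OF j]] by simp
  qed
  have h0: "s 0 = 1 \<or> s 0 = 5" using sr[of 0] by simp
  have h2: "s 2 = 3 \<or> s 2 = 1" using sr[of 2] by simp
  have h4: "s 4 = 5 \<or> s 4 = 3" using sr[of 4] by simp
  have i3: "i = 0 \<or> i = 1 \<or> i = 2" using i by auto
  have p: "pos 0 True = 0" "pos 1 True = 4" "pos 2 True = 2" by (simp_all add: pos_def)
  show ?thesis
  proof (cases "s 0 = 1")
    case True
    have c: "cc v = 1" unfolding cc_def using sgv[of 0] True by simp
    have s1: "s 1 = 0" using inv[of 0] True by simp
    have s2: "s 2 = 3" using h2 inv[of 2] s1 by auto
    have s3: "s 3 = 2" using inv[of 2] s2 by simp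
    have s4: "s 4 = 5" using h4 inv[of 4] s3 by auto
    show ?thesis using i3 p c True s2 s4 unfolding s_def[symmetric] by (elim disjE) simp_all
  next
    case False
    then have s0: "s 0 = 5" using h0 by simp
    have c: "cc v = 2" unfolding cc_def using sgv[of 0] False by auto
    have s5: "s 5 = 0" using inv[of 0] s0 by simp
    have s4: "s 4 = 3" using h4 inv[of 4] s5 by auto
    have s3: "s 3 = 4" using inv[of 4] s4 by simp
    have s2: "s 2 = 1" using h2 inv[of 2] s3 by auto
    show ?thesis using i3 p c s0 s2 s4 unfolding s_def[symmetric] by (elim disjE) simp_all
  qed
qed

lemma cc12: "cc v = 1 \<or> cc v = 2" unfolding cc_def by simp

lemma rho_eq: assumes "v \<in> V" "u \<in> nbrs E v" shows "rho v u = nb v ((idx v u + cc v) mod 3)"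
  unfolding rho_def using dich[OF assms(1) nbr(4)[OF assms]] by simp

lemma rho_nbr: assumes "v \<in> V" "u \<in> nbrs E v" shows "rho v u \<in> nbrs E v"
  unfolding rho_eq[OF assms] by (rule nbi(1)[OF assms(1)]) simp

lemma rho_pow: assumes "v \<in> V" "u \<in> nbrs E v"
  shows "(rho v ^^ k) u = nb v ((idx v u + k * cc v) mod 3)"
proof (induction k)
  case 0 then show ?case using nbr(4,5)[OF assms] by simp
next
  case (Suc k)
  define m where "m = (idx v u + k * cc v) mod 3"
  have m: "m < 3" unfolding m_def by simp
  have "(rho v ^^ Suc k) u = rho v (nb v m)" using Suc m_def by simp
  also have "\<dots> = nb v ((m + cc v) mod 3)" using rho_eq[OF assms(1) nbi(1)[OF assms(1) m]] nbi(2)[OF assms(1) m] by simp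
  also have "(m + cc v) mod 3 = (idx v u + Suc k * cc v) mod 3" unfolding m_def mod_add_left_eq by (simp add: algebra_simps)
  finally show ?case .
qed

lemma rot: "rotation_system V E rho"
  unfolding rotation_system_def
proof (rule ballI, rule conjI)
  fix v assume v: "v \<in> V"
  have "card (nbrs E v) = 3" using cub v unfolding cubic_graph_def by blast
  then have fin: "finite (nbrs E v)" by (intro card_ge_0_finite) simp
  have sub: "rho v ` nbrs E v \<subseteq> nbrs E v" using rho_nbr[OF v] by auto
  have inj: "inj_on (rho v) (nbrs E v)"
  proof (rule inj_onI)
    fix a b assume a: "a \<in> nbrs E v" and b: "b \<in> nbrs E v" and e: "rho v a = rho v b"
    have "(idx v a + cc v) mod 3 = (idx v b + cc v) mod 3"
      using arg_cong[OF e, of "idx v"] rho_eq[OF v a] rho_eq[OF v b] nbi(2)[OF v] by simp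
    moreover have "idx v a = 0 \<or> idx v a = 1 \<or> idx v a = 2" using nbr(4)[OF v a] by auto
    moreover have "idx v b = 0 \<or> idx v b = 1 \<or> idx v b = 2" using nbr(4)[OF v b] by auto
    ultimately have "idx v a = idx v b" using cc12[of v] by (elim disjE) simp_all
    then show "a = b" using nbr(5)[OF v a] nbr(5)[OF v b] by metis
  qed
  show "bij_betw (rho v) (nbrs E v) (nbrs E v)" unfolding bij_betw_def
    using inj endo_inj_surj[OF fin sub inj] by simp
  show "\<forall>u\<in>nbrs E v. \<forall>w\<in>nbrs E v. \<exists>k. (rho v ^^ k) u = w"
  proof (intro ballI)
    fix u w assume u: "u \<in> nbrs E v" and w: "w \<in> nbrs E v"
    define a where "a = idx v u"
    define b where "b = idx v w"
    have ab: "a < 3" "b < 3" using nbr(4)[OF v u] nbr(4)[OF v w] a_def b_def by auto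
    have a3: "a = 0 \<or> a = 1 \<or> a = 2" and b3: "b = 0 \<or> b = 1 \<or> b = 2" using ab by auto
    have "(a + (cc v * (b + 3 - a)) * cc v) mod 3 = b"
      using a3 b3 cc12[of v] by (elim disjE) simp_all
    then have "(rho v ^^ (cc v * (b + 3 - a))) u = w" using rho_pow[OF v u] a_def b_def nbr(5)[OF v w] by simp
    then show "\<exists>k. (rho v ^^ k) u = w" by blast
  qed
qed

lemma darts_iff: "d \<in> darts E \<longleftrightarrow> {fst d, snd d} \<in> E" unfolding darts_def by (cases d) auto

lemma fs: assumes "{u,v} \<in> E"
  shows "ph (xv (u,v)) = xv (face_step rho (u,v))" "face_step rho (u,v) \<in> darts E"
proof -
  have v1: "v \<in> V" using edgeV[OF assms] by simp
  have v2: "u \<in> nbrs E v" using assms unfolding nbrs_def by simp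
  note v = v1 v2
  define x where "x = xv (u,v)"
  have x: "x \<in> SS" "even (snd x)" using xvS[OF assms] x_def by auto
  define j where "j = snd (sg x)"
  have "fst (sg x) = v" using sg_ex(2)[OF x(1)] unfolding x_def xv_def by simp
  then have sgx: "sg x = (v, j)" unfolding j_def by (intro prod_eqI) simp_all
  have oj: "odd j" using sg_par[OF x(1)] x(2) j_def by simp
  define w where "w = nb v (j mod 3)"
  have rw: "rho v u = w" unfolding rho_def w_def j_def x_def xv_def by simp
  have "ph x = tau (v, j)" unfolding ph_def using sgx by simp
  also have "\<dots> = (w, pos (idx w v) True)" unfolding tau_def w_def using oj by simp
  also have "\<dots> = xv (face_step rho (u,v))" using rw unfolding face_step_def xv_def by simp
  finally show "ph (xv (u,v)) = xv (face_step rho (u,v))" using x_def by simp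
  have "w \<in> nbrs E v" unfolding w_def by (rule nbi(1)[OF v(1)]) simp
  then have "{w, v} \<in> E" unfolding nbrs_def by simp
  moreover have "{v, w} = {w, v}" by (rule insert_commute)
  ultimately show "face_step rho (u,v) \<in> darts E" using rw unfolding face_step_def darts_iff by simp
qed

lemma fs_pow: assumes "d \<in> darts E"
  shows "(ph^^k) (xv d) = xv ((face_step rho ^^ k) d) \<and> (face_step rho ^^ k) d \<in> darts E"
proof (induction k)
  case 0 then show ?case using assms by simp
next
  case (Suc k)
  obtain a b where ab: "(face_step rho ^^ k) d = (a,b)" by (cases "(face_step rho ^^ k) d")
  have e: "{a,b} \<in> E" using Suc ab darts_iff by fastforce
  show ?case using Suc fs[OF e] ab by simp
qed


lemma whp_in_Cx: assumes d: "d \<in> darts E" and uv: "{u,v} \<in> E"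
  shows "whp u v \<in> Cx (xv d) \<longleftrightarrow> (\<exists>k. (face_step rho ^^ k) d = (u,v))"
proof
  assume "\<exists>k. (face_step rho ^^ k) d = (u,v)"
  then obtain k where k: "(face_step rho ^^ k) d = (u,v)" by blast
  have "whp u v = {(ph^^k) (xv d), tau ((ph^^k) (xv d))}" using xvS(3)[OF uv] fs_pow[OF d, of k] k by simp
  then show "whp u v \<in> Cx (xv d)" unfolding Cx_def by blast
next
  assume w: "whp u v \<in> Cx (xv d)"
  have xd: "xv d \<in> SS" using d darts_iff xvS(1)[of "fst d" "snd d"] by simp
  have ne: "fst (xv (u,v)) \<noteq> fst (tau (xv (u,v)))" using tauS(4)[OF xvS(1)[OF uv]] by metis
  have wh: "whp u v = {xv (u,v), tau (xv (u,v))}" using xvS(3)[OF uv] .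
  from w obtain k where k: "whp u v = {(ph^^k) (xv d), sg ((ph^^k) (xv d))} \<or>
      whp u v = {(ph^^k) (xv d), tau ((ph^^k) (xv d))}" unfolding Cx_def by blast
  define y where "y = (ph^^k) (xv d)"
  have yS: "y \<in> SS" using phkS[OF xd] y_def by simp
  have "whp u v \<noteq> {y, sg y}"
  proof
    assume "whp u v = {y, sg y}"
    then have "xv (u,v) \<in> {y, sg y}" "tau (xv (u,v)) \<in> {y, sg y}" using wh by blast+
    then have "fst (xv (u,v)) = fst y" "fst (tau (xv (u,v))) = fst y" using sg_ex(2)[OF yS] by auto
    then show False using ne by simp
  qed
  then have e: "{xv (u,v), tau (xv (u,v))} = {y, tau y}" using k wh y_def by simp
  have ey: "even (snd y)" using phkP[OF xd, of k] xvS(4)[of "fst d" "snd d"] d darts_iff y_def by simp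
  have ex: "even (snd (xv (u,v)))" using xvS(4)[OF uv] .
  have "snd (tau (xv (u,v))) \<noteq> snd y" using tauS(3)[OF xvS(1)[OF uv]] ex ey by auto
  then have "xv (u,v) = y" using e by (metis doubleton_eq_iff)
  moreover have "y = xv ((face_step rho ^^ k) d)" using fs_pow[OF d, of k] y_def by simp
  moreover have "{fst ((face_step rho ^^ k) d), snd ((face_step rho ^^ k) d)} \<in> E"
    using fs_pow[OF d, of k] darts_iff by blast
  ultimately have "u = fst ((face_step rho ^^ k) d) \<and> v = snd ((face_step rho ^^ k) d)"
    using xv_inj[OF uv] by (metis prod.collapse)
  then show "\<exists>k. (face_step rho ^^ k) d = (u,v)" by (metis prod.collapse)
qed

lemma face_eq: assumes d: "d \<in> darts E"
  shows "induced_subgraph E idx (Cx (xv d)) = face_boundary rho d"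
proof
  show "induced_subgraph E idx (Cx (xv d)) \<subseteq> face_boundary rho d"
  proof
    fix e assume "e \<in> induced_subgraph E idx (Cx (xv d))"
    then obtain u v where uv: "e \<in> E" "e = {u,v}" "white_e idx u v \<in> Cx (xv d) \<or> white_ebar idx u v \<in> Cx (xv d)"
      unfolding induced_subgraph_def by blast
    have E1: "{u,v} \<in> E" using uv by simp
    have vu: "{v,u} = {u,v}" by (rule insert_commute)
    have E2: "{v,u} \<in> E" using E1 vu by simp
    have "whp u v \<in> Cx (xv d) \<or> whp v u \<in> Cx (xv d)" using white_iff[OF E1] uv(3) by simp
    then obtain k where "(face_step rho ^^ k) d = (u,v) \<or> (face_step rho ^^ k) d = (v,u)"
      using whp_in_Cx[OF d E1] whp_in_Cx[OF d E2] by blast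
    then have "e = {fst ((face_step rho ^^ k) d), snd ((face_step rho ^^ k) d)}"
    proof
      assume "(face_step rho ^^ k) d = (u,v)" then show ?thesis using uv(2) by simp
    next
      assume "(face_step rho ^^ k) d = (v,u)" then show ?thesis using uv(2) vu by simp
    qed
    then show "e \<in> face_boundary rho d" unfolding face_boundary_def by blast
  qed
next
  show "face_boundary rho d \<subseteq> induced_subgraph E idx (Cx (xv d))"
  proof
    fix e assume "e \<in> face_boundary rho d"
    then obtain k where k: "e = {fst ((face_step rho ^^ k) d), snd ((face_step rho ^^ k) d)}"
      unfolding face_boundary_def by blast
    obtain u v where uv: "(face_step rho ^^ k) d = (u,v)" by (cases "(face_step rho ^^ k) d")
    have E1: "{u,v} \<in> E" using fs_pow[OF d, of k] uv darts_iff by fastforce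
    have "whp u v \<in> Cx (xv d)" using whp_in_Cx[OF d E1] uv by blast
    then have "white_e idx u v \<in> Cx (xv d) \<or> white_ebar idx u v \<in> Cx (xv d)" using white_iff[OF E1] by simp
    moreover have "e = {u,v}" using k uv by simp
    ultimately show "e \<in> induced_subgraph E idx (Cx (xv d))" unfolding induced_subgraph_def using E1 by blast
  qed
qed

lemma faces: "face_boundaries E rho = induced_subgraph E idx ` cycles_of (M \<union> white_edges E idx)"
  unfolding FF_eq face_boundaries_def
proof
  show "face_boundary rho ` darts E \<subseteq> induced_subgraph E idx ` cycles_of FF"
  proof
    fix f assume "f \<in> face_boundary rho ` darts E"
    then obtain d where d: "d \<in> darts E" "f = face_boundary rho d" by blast
    have xd: "xv d \<in> SS" using d darts_iff xvS(1)[of "fst d" "snd d"] by simp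
    have A0: "{xv d, sg (xv d)} \<in> Cx (xv d)" unfolding Cx_def by (auto intro!: exI[of _ 0])
    have "{xv d, sg (xv d)} \<in> FF" unfolding FF_def using xd by blast
    then have "Cx (xv d) \<in> cycles_of FF" unfolding cycles_of_def using comp_eq[OF xd A0] by (metis image_eqI)
    then show "f \<in> induced_subgraph E idx ` cycles_of FF" using face_eq[OF d(1)] d(2) by (metis image_eqI)
  qed
next
  show "induced_subgraph E idx ` cycles_of FF \<subseteq> face_boundary rho ` darts E"
  proof
    fix f assume "f \<in> induced_subgraph E idx ` cycles_of FF"
    then obtain C where C: "C \<in> cycles_of FF" "f = induced_subgraph E idx C" by blast
    then obtain e where e: "e \<in> FF" "C = component_edges FF e" unfolding cycles_of_def by blast
    then obtain x where x: "x \<in> SS" "even (snd x)" "e \<in> Cx x" using F_in_Cx by blast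
    have CC: "C = Cx x" using comp_eq[OF x(1,3)] e by simp
    obtain u v where uv: "{u,v} \<in> E" "x = xv (u,v)" using xv_surj[OF x(1,2)] by blast
    have d: "(u,v) \<in> darts E" using uv darts_iff by simp
    have "f = face_boundary rho (u,v)" using C(2) CC uv(2) face_eq[OF d] by simp
    then show "f \<in> face_boundary rho ` darts E" using d by blast
  qed
qed

lemma main_M:
  "M \<inter> white_edges E idx = {}
   \<and> (\<forall>C\<in>cycles_of (M \<union> white_edges E idx). is_cycle C)
   \<and> rotation_system V E rho
   \<and> face_boundaries E rho = induced_subgraph E idx ` cycles_of (M \<union> white_edges E idx)"
  using disj all_cycles rot faces FF_eq by simp

end

context hexctx
begin

lemma rot3: assumes rs: "rotation_system V E r" and v: "v \<in> V" and u: "u \<in> nbrs E v"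
  shows "r v u = nb v ((idx v u + (if idx v (r v (nb v 0)) = 1 then 1 else 2)) mod 3)"
proof -
  have bj: "bij_betw (r v) (nbrs E v) (nbrs E v)" and orb: "\<forall>a\<in>nbrs E v. \<forall>b\<in>nbrs E v. \<exists>k. (r v ^^ k) a = b"
    using rs v unfolding rotation_system_def by auto
  define f where "f i = idx v (r v (nb v i))" for i
  have rn: "i < 3 \<Longrightarrow> r v (nb v i) \<in> nbrs E v" for i by (rule bij_betw_apply[OF bj nbi(1)[OF v]])
  have flt: "i < 3 \<Longrightarrow> f i < 3" for i unfolding f_def using nbr(4)[OF v rn] by simp
  have fback: "i < 3 \<Longrightarrow> nb v (f i) = r v (nb v i)" for i unfolding f_def using nbr(5)[OF v rn] by simp
  have finj: "i < 3 \<Longrightarrow> j < 3 \<Longrightarrow> f i = f j \<Longrightarrow> i = j" for i j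
  proof -
    assume ij: "i < 3" "j < 3" "f i = f j"
    then have "nb v (f i) = nb v (f j)" by simp
    then have "r v (nb v i) = r v (nb v j)" using fback[OF ij(1)] fback[OF ij(2)] by simp
    then have "nb v i = nb v j" by (rule inj_onD[OF bij_betw_imp_inj_on[OF bj] _ nbi(1)[OF v ij(1)] nbi(1)[OF v ij(2)]])
    then have "idx v (nb v i) = idx v (nb v j)" by simp
    then show "i = j" using nbi(2)[OF v ij(1)] nbi(2)[OF v ij(2)] by simp
  qed
  have nofix: "i < 3 \<Longrightarrow> f i \<noteq> i" for i
  proof
    assume i: "i < 3" and fi: "f i = i"
    then have fx: "r v (nb v i) = nb v i" using fback[OF i] by simp
    have all: "(r v ^^ k) (nb v i) = nb v i" for k by (induction k) (simp_all add: fx)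
    have j: "(i + 1) mod 3 < 3" by simp
    obtain k where "(r v ^^ k) (nb v i) = nb v ((i+1) mod 3)"
      using orb[rule_format, OF nbi(1)[OF v i] nbi(1)[OF v j]] by blast
    then have "nb v i = nb v ((i+1) mod 3)" using all by simp
    then have "idx v (nb v i) = idx v (nb v ((i+1) mod 3))" by simp
    then have "i = (i+1) mod 3" using nbi(2)[OF v i] nbi(2)[OF v j] by simp
    moreover have "i = 0 \<or> i = 1 \<or> i = 2" using i by auto
    ultimately show False by auto
  qed
  have f3: "f 0 < 3" "f 1 < 3" "f 2 < 3" using flt by auto
  have nf: "f 0 \<noteq> 0" "f 1 \<noteq> 1" "f 2 \<noteq> 2" using nofix by auto
  have df: "f 0 \<noteq> f 1" "f 0 \<noteq> f 2" "f 1 \<noteq> f 2" using finj[of 0 1] finj[of 0 2] finj[of 1 2] by auto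
  have c0: "f 0 = 1 \<or> f 0 = 2" using f3(1) nf(1) by auto
  have c1: "f 1 = 0 \<or> f 1 = 2" using f3(2) nf(2) by auto
  have c2: "f 2 = 0 \<or> f 2 = 1" using f3(3) nf(3) by auto
  have cases: "(f 0 = 1 \<and> f 1 = 2 \<and> f 2 = 0) \<or> (f 0 = 2 \<and> f 1 = 0 \<and> f 2 = 1)"
    using c0 c1 c2 df by auto
  define a where "a = idx v u"
  have a: "a < 3" using nbr(4)[OF v u] a_def by simp
  have ua: "u = nb v a" using nbr(5)[OF v u] a_def by simp
  have "r v u = nb v (f a)" using fback[OF a] ua by simp
  moreover have "f a = (a + (if f 0 = 1 then 1 else 2)) mod 3"
  proof -
    have "a = 0 \<or> a = 1 \<or> a = 2" using a by auto
    then show ?thesis using cases by (elim disjE) auto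
  qed
  ultimately show ?thesis unfolding a_def f_def by simp
qed

lemma face_cong: assumes "\<And>v u. v \<in> V \<Longrightarrow> u \<in> nbrs E v \<Longrightarrow> r v u = r' v u"
  and "\<And>v u. v \<in> V \<Longrightarrow> u \<in> nbrs E v \<Longrightarrow> r v u \<in> nbrs E v"
  shows "face_boundaries E r = face_boundaries E r'"
proof -
  have dar: "d \<in> darts E \<longleftrightarrow> {fst d, snd d} \<in> E" for d unfolding darts_def by (cases d) auto
  have step: "d \<in> darts E \<Longrightarrow> face_step r d = face_step r' d \<and> face_step r d \<in> darts E" for d
  proof -
    assume d: "d \<in> darts E"
    then have e: "{fst d, snd d} \<in> E" using dar by simp
    then have sv: "snd d \<in> V" using edgeV by simp
    have fn: "fst d \<in> nbrs E (snd d)" using e unfolding nbrs_def by simp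
    have "r (snd d) (fst d) \<in> nbrs E (snd d)" using assms(2)[OF sv fn] .
    then have "{r (snd d) (fst d), snd d} \<in> E" unfolding nbrs_def by simp
    moreover have "{snd d, r (snd d) (fst d)} = {r (snd d) (fst d), snd d}" by (rule insert_commute)
    ultimately have "face_step r d \<in> darts E" unfolding face_step_def dar by simp
    then show ?thesis unfolding face_step_def using assms(1)[OF sv fn] by simp
  qed
  have pw: "d \<in> darts E \<Longrightarrow> (face_step r ^^ k) d = (face_step r' ^^ k) d \<and> (face_step r ^^ k) d \<in> darts E" for d k
  proof (induction k)
    case 0 then show ?case by simp
  next
    case (Suc k)
    let ?y = "(face_step r ^^ k) d"
    have "?y \<in> darts E" "(face_step r' ^^ k) d = ?y" using Suc by auto
    then show ?case using step[of ?y] by (simp del: funpow.simps add: funpow_Suc_right[symmetric]) (metis comp_apply funpow.simps(2))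
  qed
  have "d \<in> darts E \<Longrightarrow> face_boundary r d = face_boundary r' d" for d
    unfolding face_boundary_def using pw by simp
  then show ?thesis unfolding face_boundaries_def by (intro image_cong) auto
qed

definition "ch r v = (idx v (r v (nb v 0)) = 1)"
definition "MM r = {{(v,i),(v,(i+1) mod 6)} | v (i::nat). v \<in> V \<and> i < 6 \<and> even i = ch r v}"

lemma MM_bpm: "blue_perfect_matching V E idx (MM r)"
  unfolding blue_perfect_matching_def
proof (intro conjI ballI)
  have sub: "MM r \<subseteq> blue_edges V" unfolding MM_def blue_edges_def by blast
  then show "MM r \<subseteq> hexagon_graph_edges V E idx" unfolding hexagon_graph_edges_def by blast
  show "MM r \<subseteq> blue_edges V" by (rule sub)
  fix x assume x: "x \<in> SS"
  obtain v j where vj: "x = (v,j)" "v \<in> V" "j < 6" using x S_iff by (cases x) auto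
  define i0 where "i0 = (if even j = ch r v then j else (j+5) mod 6)"
  have i0: "i0 < 6" "even i0 = ch r v" unfolding i0_def using vj(3) by (auto, presburger+)
  define e0 where "e0 = {(v,i0),(v,(i0+1) mod 6)}"
  have e0M: "e0 \<in> MM r" unfolding e0_def MM_def using i0 vj(2) by blast
  have xe0: "x \<in> e0"
  proof (cases "even j = ch r v")
    case True then show ?thesis unfolding e0_def i0_def vj by simp
  next
    case False
    have "((j+5) mod 6 + 1) mod 6 = j" using vj(3) by presburger
    then show ?thesis unfolding e0_def i0_def vj using False by simp
  qed
  show "\<exists>!e. e \<in> MM r \<and> x \<in> e"
  proof (rule ex1I[of _ e0])
    show "e0 \<in> MM r \<and> x \<in> e0" using e0M xe0 by simp
    fix e assume e: "e \<in> MM r \<and> x \<in> e"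
    then obtain w i where wi: "e = {(w,i),(w,(i+1) mod 6)}" "w \<in> V" "i < 6" "even i = ch r w"
      unfolding MM_def by blast
    have "x = (w,i) \<or> x = (w,(i+1) mod 6)" using e wi(1) by blast
    then have w: "w = v" "i = j \<or> (i+1) mod 6 = j" using vj(1) by auto
    have "i = i0"
    proof (cases "i = j")
      case True then show ?thesis using wi(4) w(1) unfolding i0_def by simp
    next
      case False
      then have ij: "(i+1) mod 6 = j" using w by simp
      then have "i = (j+5) mod 6" "even i \<noteq> even j" using wi(3) by presburger+
      then show ?thesis using wi(4) w(1) unfolding i0_def by auto
    qed
    then show "e = e0" unfolding e0_def using wi(1) w(1) by simp
  qed
qed

lemma converse: assumes rs: "rotation_system V E r"
  shows "\<exists>M. blue_perfect_matching V E idx M \<and>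
           face_boundaries E r = induced_subgraph E idx ` cycles_of (M \<union> white_edges E idx)"
proof -
  interpret H: hexM V E idx "MM r" using MM_bpm by unfold_locales
  have agree: "r v u = H.rho v u" if v: "v \<in> V" and u: "u \<in> nbrs E v" for v u
  proof -
    have inS: "(v,0) \<in> SS" using v S_iff by simp
    have cc: "H.cc v = (if ch r v then 1 else 2)"
    proof (cases "ch r v")
      case True
      have "{(v,0),(v,1)} \<in> MM r" unfolding MM_def using v True by force
      then have "H.sg (v,0) = (v,1)" using H.sg_char[OF inS] by simp
      then show ?thesis unfolding H.cc_def using True by simp
    next
      case False
      have "{(v,5),(v,0)} \<in> MM r" unfolding MM_def using v False
        by (intro CollectI exI[of _ v] exI[of _ 5]) simp
      moreover have "{(v,5),(v,0)} = {(v,0),(v,5::nat)}" by (rule insert_commute)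
      ultimately have "H.sg (v,0) = (v,5)" using H.sg_char[OF inS] by simp
      then show ?thesis unfolding H.cc_def using False by simp
    qed
    show ?thesis using rot3[OF rs v u] H.rho_eq[OF v u] cc unfolding ch_def by simp
  qed
  have rn: "r v u \<in> nbrs E v" if v: "v \<in> V" and u: "u \<in> nbrs E v" for v u
    using rs v u unfolding rotation_system_def bij_betw_def by blast
  have "face_boundaries E r = face_boundaries E H.rho" by (rule face_cong) (use agree rn in auto)
  then show ?thesis using H.main_M MM_bpm by metis
qed

end

theorem mainTheorem1:
  fixes V :: "'a set" and E :: "'a set set" and idx :: "'a \<Rightarrow> 'a \<Rightarrow> nat"
  assumes "cubic_graph V E"
    and "hexagon_labelling V E idx"
  shows "(\<forall>M. blue_perfect_matching V E idx M \<longrightarrow>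
            M \<inter> white_edges E idx = {}
          \<and> (\<forall>C\<in>cycles_of (M \<union> white_edges E idx). is_cycle C)
          \<and> (\<exists>\<rho>. rotation_system V E \<rho> \<and>
               face_boundaries E \<rho> = induced_subgraph E idx ` cycles_of (M \<union> white_edges E idx)))
       \<and> (\<forall>\<rho>. rotation_system V E \<rho> \<longrightarrow>
            (\<exists>M. blue_perfect_matching V E idx M \<and>
               face_boundaries E \<rho> = induced_subgraph E idx ` cycles_of (M \<union> white_edges E idx)))"
proof (intro conjI allI impI)
  interpret hexctx V E idx using assms by unfold_locales
  fix M assume M: "blue_perfect_matching V E idx M"
  interpret H: hexM V E idx M using M by unfold_locales
  show "M \<inter> white_edges E idx = {}" using H.main_M by simp
  show "\<forall>C\<in>cycles_of (M \<union> white_edges E idx). is_cycle C" using H.main_M by simp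
  show "\<exists>\<rho>. rotation_system V E \<rho> \<and>
          face_boundaries E \<rho> = induced_subgraph E idx ` cycles_of (M \<union> white_edges E idx)"
    using H.main_M by blast
next
  interpret hexctx V E idx using assms by unfold_locales
  fix r assume "rotation_system V E r"
  then show "\<exists>M. blue_perfect_matching V E idx M \<and>
           face_boundaries E r = induced_subgraph E idx ` cycles_of (M \<union> white_edges E idx)"
    by (rule converse)
qed

end
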